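(* Let $G=\langle S_k\mid K\rangle$ be a finitely generated semigroup as described in the context with $K$ primitive, and suppose $\sum_{j=1}^kK(s_i,s_j)=k$ for some $s_i\in S_k$. Let $\mathcal{A}$ be a finite alphabet and $X=X_{\mathbf{A}}\subseteq\mathcal{A}^G$ a Markov tree shift. Then the topological entropy of $X$ exists and \[h(X)=\lim_{n\to\infty}\frac{\log p_n}{|\Delta_n|}=h^{(s)}(X).\]
   Context: Let $K$ be a $k\times k$ matrix with entries in $\{0,1\}$ indexed by $S_k=\{s_1,\dots,s_k\}$, and let $G=\langle S_k\mid K\rangle$ be the semigroup generated by $S_k$ subject to the relations $s_is_j=1_G$ if and only if $K(s_i,s_j)=0$ ($1_G$ the identity). Every $g\in G$ has a unique minimal representation $g=g_1g_2\cdots g_n$ with $g_l\in S_k$ and $K(g_l,g_{l+1})=1$; its length is $|g|=n$ (with $|1_G|=0$). For $n\ge0$, $\Delta_n=\{h\in G:|h|\le n\}$, and for $g\in G$ the $n$-semiball is $\bar{\Delta}^{(g)}_n=\{gh: h\in G,\ |h|\le n,\ |gh|=|g|+|h|\}$. For a finite alphabet $\mathcal{A}$, a pattern is a map $u:H\to\mathcal{A}$ with $H\subset G$ finite; $u$ is accepted by $t\in\mathcal{A}^G$ if there is $g\in G$ with $t_{gh}=u_h$ for all $h\in H$. For a subset $X\subseteq\mathcal{A}^G$, $p_n$ is the number of patterns $u\in\mathcal{A}^{\Delta_n}$ accepted by some $t\in X$, and $p^{(g)}_n$ the number of patterns $u\in\mathcal{A}^{\bar{\Delta}^{(g)}_n}$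 accepted by some $t\in X$. Given a $k$-tuple $\mathbf{A}=(A_1,\dots,A_k)$ of $\{0,1\}$-matrices indexed by $\mathcal{A}$, the Markov tree shift is $X_{\mathbf{A}}=\{t\in\mathcal{A}^G: A_i(t_g,t_{gs_i})=1 \text{ for all } g\in G \text{ and } i \text{ with } |gs_i|=|g|+1\}$. The $i$th stem entropy is $h^{(s_i)}(X)=\limsup_{n\to\infty}\log p^{(s_i)}_n/|\bar{\Delta}^{(s_i)}_n|$; since $K$ is primitive these values all coincide, and $h^{(s)}(X)$ denotes their common value (the stem entropy). A nonnegative square matrix is primitive if some power has all entries positive. *)

theory Defs
  imports Complex_Main "HOL-Library.Extended_Real" "HOL-Library.Liminf_Limsup"
begin

text \<open>The generators s_1..s_k are encoded as the indices 0..k-1; the matrix K is a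
function nat => nat => nat (only indices < k matter). Elements of
G = <S_k | K> are their unique minimal representations: words (lists of
generator indices) with K(g_l, g_(l+1)) = 1 for consecutive letters.
The identity is the empty word.\<close>

definition Gset :: "nat \<Rightarrow> (nat \<Rightarrow> nat \<Rightarrow> nat) \<Rightarrow> nat list set" where
  "Gset k K = {w. set w \<subseteq> {..<k} \<and> (\<forall>l. Suc l < length w \<longrightarrow> K (w ! l) (w ! Suc l) = 1)}"

text \<open>Right multiplication by one generator: s_i s_j = 1 iff K(s_i,s_j) = 0.\<close>
definition push :: "(nat \<Rightarrow> nat \<Rightarrow> nat) \<Rightarrow> nat list \<Rightarrow> nat \<Rightarrow> nat list" where
  "push K g x = (if g \<noteq> [] \<and> K (last g) x = 0 then butlast g else g @ [x])"

fun gmult :: "(nat \<Rightarrow> nat \<Rightarrow> nat) \<Rightarrow> nat list \<Rightarrow> nat list \<Rightarrow> nat list" where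
  "gmult K g [] = g"
| "gmult K g (x # h) = gmult K (push K g x) h"

definition ball :: "nat \<Rightarrow> (nat \<Rightarrow> nat \<Rightarrow> nat) \<Rightarrow> nat \<Rightarrow> nat list set" where
  "ball k K n = {h \<in> Gset k K. length h \<le> n}"

definition semiball :: "nat \<Rightarrow> (nat \<Rightarrow> nat \<Rightarrow> nat) \<Rightarrow> nat list \<Rightarrow> nat \<Rightarrow> nat list set" where
  "semiball k K g n = {gmult K g h | h. h \<in> Gset k K \<and> length h \<le> n \<and>
      length (gmult K g h) = length g + length h}"

text \<open>Patterns u : H -> alphabet accepted by some t in X (represented as
functions extensional outside H).\<close>
definition accepted_patterns ::
  "nat \<Rightarrow> (nat \<Rightarrow> nat \<Rightarrow> nat) \<Rightarrow> (nat list \<Rightarrow> 'a) set \<Rightarrow> nat list set \<Rightarrow> (nat list \<Rightarrow> 'a) set" where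
  "accepted_patterns k K X H =
     {(\<lambda>h. if h \<in> H then t (gmult K g h) else undefined) | t g. t \<in> X \<and> g \<in> Gset k K}"

definition pn :: "nat \<Rightarrow> (nat \<Rightarrow> nat \<Rightarrow> nat) \<Rightarrow> (nat list \<Rightarrow> 'a) set \<Rightarrow> nat \<Rightarrow> nat" where
  "pn k K X n = card (accepted_patterns k K X (ball k K n))"

definition pn_semi :: "nat \<Rightarrow> (nat \<Rightarrow> nat \<Rightarrow> nat) \<Rightarrow> (nat list \<Rightarrow> 'a) set \<Rightarrow> nat list \<Rightarrow> nat \<Rightarrow> nat" where
  "pn_semi k K X g n = card (accepted_patterns k K X (semiball k K g n))"

text \<open>Markov tree shift X_A; A i is the 0-1 matrix A_i (as a relation).\<close>
definition markov_tree_shift ::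
  "nat \<Rightarrow> (nat \<Rightarrow> nat \<Rightarrow> nat) \<Rightarrow> (nat \<Rightarrow> 'a \<Rightarrow> 'a \<Rightarrow> bool) \<Rightarrow> (nat list \<Rightarrow> 'a) set" where
  "markov_tree_shift k K A = {t. \<forall>g\<in>Gset k K. \<forall>i<k.
      length (gmult K g [i]) = Suc (length g) \<longrightarrow> A i (t g) (t (gmult K g [i]))}"

definition stem_entropy ::
  "nat \<Rightarrow> (nat \<Rightarrow> nat \<Rightarrow> nat) \<Rightarrow> (nat list \<Rightarrow> 'a) set \<Rightarrow> nat \<Rightarrow> ereal" where
  "stem_entropy k K X i = limsup (\<lambda>n. ereal (ln (real (pn_semi k K X [i] n)) /
       real (card (semiball k K [i] n))))"

fun kpow :: "nat \<Rightarrow> (nat \<Rightarrow> nat \<Rightarrow> nat) \<Rightarrow> nat \<Rightarrow> nat \<Rightarrow> nat \<Rightarrow> nat" where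
  "kpow k K 0 i j = (if i = j then 1 else 0)"
| "kpow k K (Suc m) i j = (\<Sum>l<k. kpow k K m i l * K l j)"

definition primitive :: "nat \<Rightarrow> (nat \<Rightarrow> nat \<Rightarrow> nat) \<Rightarrow> bool" where
  "primitive k K = (\<exists>m\<ge>1. \<forall>i<k. \<forall>j<k. kpow k K m i j > 0)"

end

theory Submission
  imports Defs "HOL-Library.FuncSet"
begin


lemma gmult_append: "gmult K g (xs @ ys) = gmult K (gmult K g xs) ys"
  by (induction xs arbitrary: g) auto

lemma Gset_Nil[simp]: "[] \<in> Gset k K"
  by (simp add: Gset_def)

lemma Gset_Cons: "y # h \<in> Gset k K \<longleftrightarrow> y < k \<and> h \<in> Gset k K \<and> (h \<noteq> [] \<longrightarrow> K y (hd h) = 1)"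
proof -
  have "(\<forall>l. Suc l < length (y#h) \<longrightarrow> K ((y#h)!l) ((y#h)!Suc l) = 1) \<longleftrightarrow>
        (h \<noteq> [] \<longrightarrow> K y (hd h) = 1) \<and> (\<forall>l. Suc l < length h \<longrightarrow> K (h!l) (h!Suc l) = 1)"
  proof (cases h)
    case Nil then show ?thesis by simp
  next
    case (Cons a r)
    show ?thesis
    proof
      assume H: "\<forall>l. Suc l < length (y#h) \<longrightarrow> K ((y#h)!l) ((y#h)!Suc l) = 1"
      have "K y (hd h) = 1" using H[rule_format, of 0] Cons by simp
      moreover have "\<forall>l. Suc l < length h \<longrightarrow> K (h!l) (h!Suc l) = 1"
        using H by (metis Suc_less_eq length_Cons nth_Cons_Suc)
      ultimately show "(h \<noteq> [] \<longrightarrow> K y (hd h) = 1) \<and> (\<forall>l. Suc l < length h \<longrightarrow> K (h!l) (h!Suc l) = 1)" by simp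
    next
      assume H: "(h \<noteq> [] \<longrightarrow> K y (hd h) = 1) \<and> (\<forall>l. Suc l < length h \<longrightarrow> K (h!l) (h!Suc l) = 1)"
      show "\<forall>l. Suc l < length (y#h) \<longrightarrow> K ((y#h)!l) ((y#h)!Suc l) = 1"
      proof (intro allI impI)
        fix l assume "Suc l < length (y#h)"
        then show "K ((y#h)!l) ((y#h)!Suc l) = 1"
          using H Cons by (cases l) (auto simp: hd_conv_nth)
      qed
    qed
  qed
  then show ?thesis by (auto simp: Gset_def)
qed

lemma Gset_append: "g @ h \<in> Gset k K \<longleftrightarrow> g \<in> Gset k K \<and> h \<in> Gset k K \<and> (g \<noteq> [] \<and> h \<noteq> [] \<longrightarrow> K (last g) (hd h) = 1)"
proof (induction g)
  case Nil then show ?case by simp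
next
  case (Cons x g)
  show ?case
  proof (cases "g = []")
    case True then show ?thesis by (simp add: Gset_Cons)
  next
    case False then show ?thesis using Cons by (auto simp: Gset_Cons)
  qed
qed

lemma Gset_set: "w \<in> Gset k K \<Longrightarrow> set w \<subseteq> {..<k}"
  by (simp add: Gset_def)

locale TS =
  fixes k :: nat and K :: "nat \<Rightarrow> nat \<Rightarrow> nat"
  assumes K01: "\<forall>i<k. \<forall>j<k. K i j \<in> {0, 1}"
begin

lemma push_Gset: assumes "g \<in> Gset k K" "x < k" shows "push K g x \<in> Gset k K"
proof (cases "g \<noteq> [] \<and> K (last g) x = 0")
  case True
  then have "butlast g @ [last g] = g" by simp
  then have "butlast g \<in> Gset k K" using assms Gset_append[of "butlast g" "[last g]" k K] by simp
  then show ?thesis using True by (simp add: push_def)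
next
  case False
  have "g \<noteq> [] \<Longrightarrow> K (last g) x = 1"
  proof -
    assume ne: "g \<noteq> []"
    have "last g < k" using Gset_set[OF assms(1)] ne by (meson last_in_set lessThan_iff subsetD)
    then have "K (last g) x \<in> {0,1}" using K01 assms(2) by blast
    then show ?thesis using False ne by auto
  qed
  moreover have "[x] \<in> Gset k K" using assms(2) by (simp add: Gset_Cons)
  ultimately have "g @ [x] \<in> Gset k K" using assms(1) Gset_append[of g "[x]" k K] by simp
  moreover have "push K g x = g @ [x]" unfolding push_def using False by (rule if_not_P)
  ultimately show ?thesis by simp
qed

lemma gmult_Gset: "g \<in> Gset k K \<Longrightarrow> set h \<subseteq> {..<k} \<Longrightarrow> gmult K g h \<in> Gset k K"
  by (induction h arbitrary: g) (auto simp: push_Gset)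

end

lemma gmult_app_Gset: "g @ h \<in> Gset k K \<Longrightarrow> gmult K g h = g @ h"
proof (induction h arbitrary: g)
  case Nil then show ?case by simp
next
  case (Cons x r)
  have e: "g @ x # r = (g @ [x]) @ r" by simp
  have "g \<noteq> [] \<Longrightarrow> K (last g) x = 1" using Cons.prems Gset_append[of g "x#r"] by auto
  then have "push K g x = g @ [x]" by (auto simp: push_def)
  moreover have "(g @ [x]) @ r \<in> Gset k K" using Cons.prems e by metis
  ultimately show ?case using Cons.IH[of "g @ [x]"] by simp
qed

lemma length_push: "length (push K g x) = (if g \<noteq> [] \<and> K (last g) x = 0 then length g - 1 else Suc (length g))"
  by (simp add: push_def)

lemma length_gmult: "length (gmult K g h) \<le> length g + length h"
proof (induction h arbitrary: g)
  case Nil then show ?case by simp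
next
  case (Cons x r)
  have "length (gmult K g (x # r)) \<le> length (push K g x) + length r" using Cons.IH by simp
  also have "\<dots> \<le> length g + length (x#r)" by (simp add: length_push) linarith
  finally show ?case .
qed

lemma gmult_len_eq: "length (gmult K g h) = length g + length h \<Longrightarrow> gmult K g h = g @ h"
proof (induction h arbitrary: g)
  case Nil then show ?case by simp
next
  case (Cons x r)
  show ?case
  proof (cases "g \<noteq> [] \<and> K (last g) x = 0")
    case True
    have "length (gmult K g (x # r)) \<le> length (push K g x) + length r" using length_gmult[of K "push K g x" r] by (simp only: gmult.simps)
    also have "\<dots> < length g + length (x#r)" using True by (simp add: length_push)
    finally have False using Cons.prems by linarith
    then show ?thesis ..
  next
    case False
    then have "push K g x = g @ [x]" by (auto simp: push_def)
    then have "length (gmult K (g @ [x]) r) = length (g @ [x]) + length r" using Cons.prems by simp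
    then have "gmult K (g @ [x]) r = (g @ [x]) @ r" by (rule Cons.IH)
    then show ?thesis using \<open>push K g x = g @ [x]\<close> by simp
  qed
qed


definition Tset :: "nat \<Rightarrow> (nat \<Rightarrow> nat \<Rightarrow> nat) \<Rightarrow> nat \<Rightarrow> nat \<Rightarrow> nat list set" where
  "Tset k K y n = {w \<in> Gset k K. \<exists>h. w = y # h \<and> length h \<le> n}"

lemma finite_Tset: "finite (Tset k K y n)"
proof -
  have "Tset k K y n \<subseteq> {w. set w \<subseteq> {..<k} \<and> length w \<le> Suc n}"
    by (auto simp: Tset_def Gset_def)
  moreover have "finite {w. set w \<subseteq> {..<k} \<and> length w \<le> Suc n}"
    by (rule finite_lists_length_le) simp
  ultimately show ?thesis by (rule finite_subset)
qed

lemma finite_ball: "finite (ball k K n)"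
proof -
  have "ball k K n \<subseteq> {w. set w \<subseteq> {..<k} \<and> length w \<le> n}"
    by (auto simp: ball_def Gset_def)
  moreover have "finite {w. set w \<subseteq> {..<k} \<and> length w \<le> n}"
    by (rule finite_lists_length_le) simp
  ultimately show ?thesis by (rule finite_subset)
qed

lemma Tset_self: "y < k \<Longrightarrow> [y] \<in> Tset k K y n"
  by (auto simp: Tset_def Gset_Cons)

context TS begin

lemma semiball_eq: assumes "y < k" shows "semiball k K [y] n = Tset k K y n"
proof
  show "semiball k K [y] n \<subseteq> Tset k K y n"
  proof
    fix w assume "w \<in> semiball k K [y] n"
    then obtain h where h: "w = gmult K [y] h" "h \<in> Gset k K" "length h \<le> n"
      "length (gmult K [y] h) = length [y] + length h" by (auto simp: semiball_def)
    have "w = y # h" using gmult_len_eq[OF h(4)] h(1) by simp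
    moreover have "[y] \<in> Gset k K" using assms by (simp add: Gset_Cons)
    then have "w \<in> Gset k K" using h(1) gmult_Gset Gset_set[OF h(2)] by simp
    ultimately show "w \<in> Tset k K y n" using h(3) by (auto simp: Tset_def)
  qed
next
  show "Tset k K y n \<subseteq> semiball k K [y] n"
  proof
    fix w assume "w \<in> Tset k K y n"
    then obtain h where h: "w = y # h" "y # h \<in> Gset k K" "length h \<le> n" by (auto simp: Tset_def)
    have g: "gmult K [y] h = y # h" using gmult_app_Gset[of "[y]" h k K] h(2) by simp
    have "h \<in> Gset k K" using h(2) by (simp add: Gset_Cons)
    then show "w \<in> semiball k K [y] n" using g h unfolding semiball_def by force
  qed
qed

end

locale TSX = TS k K for k K +
  fixes X :: "(nat list \<Rightarrow> 'a::finite) set"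
begin

abbreviation P where "P H \<equiv> accepted_patterns k K X H"

lemma P_sub: "P H \<subseteq> PiE H (\<lambda>_. UNIV)"
  by (auto simp: accepted_patterns_def PiE_def extensional_def)

lemma finite_P: "finite H \<Longrightarrow> finite (P H)"
  by (rule finite_subset[OF P_sub]) (simp add: finite_PiE)

lemma P_out: "u \<in> P H \<Longrightarrow> h \<notin> H \<Longrightarrow> u h = undefined"
  by (auto simp: accepted_patterns_def)

lemma card_P_single: "card (P {w}) \<le> card (UNIV :: 'a set)"
proof -
  have "card (P {w}) \<le> card (PiE {w} (\<lambda>_. UNIV :: 'a set))"
    by (rule card_mono[OF _ P_sub]) (simp add: finite_PiE)
  then show ?thesis by (simp add: card_PiE)
qed

lemma P_nonempty: assumes "X \<noteq> {}" shows "P H \<noteq> {}"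
proof -
  obtain t where "t \<in> X" using assms by blast
  then have "(\<lambda>h. if h \<in> H then t (gmult K [] h) else undefined) \<in> P H"
    using Gset_Nil[of k K] unfolding accepted_patterns_def by blast
  then show ?thesis by blast
qed

lemma split_card:
  fixes H H0 :: "nat list set" and V :: "'v set" and pre :: "'v \<Rightarrow> nat list" and Hs :: "'v \<Rightarrow> nat list set"
  assumes finH0: "finite H0" and sub: "H0 \<subseteq> H" and finV: "finite V"
    and finHs: "\<And>v. v \<in> V \<Longrightarrow> finite (Hs v)"
    and cover: "\<And>w. w \<in> H \<Longrightarrow> w \<in> H0 \<or> (\<exists>v\<in>V. \<exists>w'\<in>Hs v. w = pre v @ w')"
    and into: "\<And>v w'. v \<in> V \<Longrightarrow> w' \<in> Hs v \<Longrightarrow> pre v @ w' \<in> H"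
    and pre: "\<And>v. v \<in> V \<Longrightarrow> set (pre v) \<subseteq> {..<k}"
  shows "card (P H) \<le> card (P H0) * (\<Prod>v\<in>V. card (P (Hs v)))"
proof -
  define \<Phi> :: "(nat list \<Rightarrow> 'a) \<Rightarrow> _" where "\<Phi> = (\<lambda>u. ((\<lambda>h. if h \<in> H0 then u h else undefined),
      (\<lambda>v\<in>V. (\<lambda>w'. if w' \<in> Hs v then u (pre v @ w') else undefined))))"
  have img: "\<Phi> ` P H \<subseteq> P H0 \<times> PiE V (\<lambda>v. P (Hs v))"
  proof
    fix p assume "p \<in> \<Phi> ` P H"
    then obtain u where u: "u \<in> P H" "p = \<Phi> u" by blast
    then obtain t g where tg: "t \<in> X" "g \<in> Gset k K" "u = (\<lambda>h. if h \<in> H then t (gmult K g h) else undefined)"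
      by (auto simp: accepted_patterns_def)
    have 1: "(\<lambda>h. if h \<in> H0 then u h else undefined) \<in> P H0"
    proof -
      have "(\<lambda>h. if h \<in> H0 then u h else undefined) = (\<lambda>h. if h \<in> H0 then t (gmult K g h) else undefined)"
        using sub tg(3) by (intro ext) auto
      then show ?thesis using tg unfolding accepted_patterns_def by blast
    qed
    have 2: "(\<lambda>w'. if w' \<in> Hs v then u (pre v @ w') else undefined) \<in> P (Hs v)" if v: "v \<in> V" for v
    proof -
      have "(\<lambda>w'. if w' \<in> Hs v then u (pre v @ w') else undefined) =
            (\<lambda>w'. if w' \<in> Hs v then t (gmult K (gmult K g (pre v)) w') else undefined)"
        using into[OF v] tg(3) by (auto simp: gmult_append)
      moreover have "gmult K g (pre v) \<in> Gset k K" using gmult_Gset[OF tg(2) pre[OF v]] .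
      ultimately show ?thesis using tg(1) unfolding accepted_patterns_def by blast
    qed
    show "p \<in> P H0 \<times> PiE V (\<lambda>v. P (Hs v))" using u(2) 1 2 by (auto simp: \<Phi>_def)
  qed
  have inj: "inj_on \<Phi> (P H)"
  proof
    fix u1 u2 assume u1: "u1 \<in> P H" and u2: "u2 \<in> P H" and eq: "\<Phi> u1 = \<Phi> u2"
    show "u1 = u2"
    proof
      fix w
      show "u1 w = u2 w"
      proof (cases "w \<in> H")
        case False then show ?thesis using P_out u1 u2 by metis
      next
        case True
        from cover[OF True] show ?thesis
        proof
          assume "w \<in> H0"
          then show ?thesis using fun_cong[OF arg_cong[OF eq, of fst], of w] by (simp add: \<Phi>_def)
        next
          assume "\<exists>v\<in>V. \<exists>w'\<in>Hs v. w = pre v @ w'"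
          then obtain v w' where v: "v \<in> V" "w' \<in> Hs v" "w = pre v @ w'" by blast
          have "snd (\<Phi> u1) v w' = snd (\<Phi> u2) v w'" using eq by simp
          then show ?thesis using v by (simp add: \<Phi>_def)
        qed
      qed
    qed
  qed
  have fin: "finite (P H0 \<times> PiE V (\<lambda>v. P (Hs v)))"
    using finite_P[OF finH0] finite_P[OF finHs] finV by (auto intro!: finite_PiE)
  have "card (P H) = card (\<Phi> ` P H)" using card_image[OF inj] by simp
  also have "\<dots> \<le> card (P H0 \<times> PiE V (\<lambda>v. P (Hs v)))" by (rule card_mono[OF fin img])
  also have "\<dots> = card (P H0) * (\<Prod>v\<in>V. card (P (Hs v)))"
    by (simp add: card_cartesian_product card_PiE[OF finV])
  finally show ?thesis .
qed


end



context TSX begin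

definition Sc where "Sc y = {z. z < k \<and> K y z = 1}"

lemma finite_Sc: "finite (Sc y)" by (simp add: Sc_def)

lemma Tset_Gset: "w \<in> Tset k K y n \<Longrightarrow> w \<in> Gset k K" by (simp add: Tset_def)

lemma Tset_Suc: assumes "y < k"
  shows "Tset k K y (Suc n) = insert [y] (\<Union>z\<in>Sc y. Cons y ` Tset k K z n)"
proof
  show "Tset k K y (Suc n) \<subseteq> insert [y] (\<Union>z\<in>Sc y. Cons y ` Tset k K z n)"
  proof
    fix w assume "w \<in> Tset k K y (Suc n)"
    then obtain h where h: "w = y # h" "y # h \<in> Gset k K" "length h \<le> Suc n" by (auto simp: Tset_def)
    show "w \<in> insert [y] (\<Union>z\<in>Sc y. Cons y ` Tset k K z n)"
    proof (cases h)
      case Nil then show ?thesis using h by simp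
    next
      case (Cons z h')
      have "z < k" "K y z = 1" "z # h' \<in> Gset k K" using h(2) Cons by (auto simp: Gset_Cons)
      then show ?thesis using h Cons by (auto simp: Sc_def Tset_def)
    qed
  qed
next
  show "insert [y] (\<Union>z\<in>Sc y. Cons y ` Tset k K z n) \<subseteq> Tset k K y (Suc n)"
    using assms by (auto simp: Tset_def Sc_def Gset_Cons)
qed

lemma card_Tset_Suc: assumes "y < k"
  shows "card (Tset k K y (Suc n)) = Suc (\<Sum>z\<in>Sc y. card (Tset k K z n))"
proof -
  have nin: "[y] \<notin> (\<Union>z\<in>Sc y. Cons y ` Tset k K z n)" by (auto simp: Tset_def)
  have disj: "\<forall>z1\<in>Sc y. \<forall>z2\<in>Sc y. z1 \<noteq> z2 \<longrightarrow> Cons y ` Tset k K z1 n \<inter> Cons y ` Tset k K z2 n = {}"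
    by (auto simp: Tset_def)
  have "card (\<Union>z\<in>Sc y. Cons y ` Tset k K z n) = (\<Sum>z\<in>Sc y. card (Cons y ` Tset k K z n))"
    by (rule card_UN_disjoint[OF finite_Sc]) (auto simp: finite_Tset disj)
  also have "\<dots> = (\<Sum>z\<in>Sc y. card (Tset k K z n))"
    by (rule sum.cong) (auto simp: card_image)
  finally show ?thesis using Tset_Suc[OF assms] nin
    by (simp add: card_insert_disjoint finite_Tset finite_Sc)
qed

lemma step_card: assumes "y < k"
  shows "card (P (Tset k K y (Suc n))) \<le> card (UNIV :: 'a set) * (\<Prod>z\<in>Sc y. card (P (Tset k K z n)))"
proof -
  have "card (P (Tset k K y (Suc n))) \<le> card (P {[y]}) * (\<Prod>z\<in>Sc y. card (P (Tset k K z n)))"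
  proof (rule split_card[where pre = "\<lambda>_. [y]"])
    show "{[y]} \<subseteq> Tset k K y (Suc n)" using Tset_self[OF assms] by simp
    show "set [y] \<subseteq> {..<k}" using assms by simp
    fix w assume "w \<in> Tset k K y (Suc n)"
    then show "w \<in> {[y]} \<or> (\<exists>v\<in>Sc y. \<exists>w'\<in>Tset k K v n. w = [y] @ w')"
      using Tset_Suc[OF assms] by auto
  next
    fix v w' assume "v \<in> Sc y" "w' \<in> Tset k K v n"
    then show "[y] @ w' \<in> Tset k K y (Suc n)" using Tset_Suc[OF assms] by auto
  qed (auto simp: finite_Sc finite_Tset)
  also have "\<dots> \<le> card (UNIV :: 'a set) * (\<Prod>z\<in>Sc y. card (P (Tset k K z n)))"
    by (rule mult_right_mono[OF card_P_single]) simp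
  finally show ?thesis .
qed

lemma ball_Suc: "ball k K (Suc n) = insert [] (\<Union>z\<in>{..<k}. Tset k K z n)"
proof
  show "ball k K (Suc n) \<subseteq> insert [] (\<Union>z\<in>{..<k}. Tset k K z n)"
  proof
    fix h assume h: "h \<in> ball k K (Suc n)"
    show "h \<in> insert [] (\<Union>z\<in>{..<k}. Tset k K z n)"
    proof (cases h)
      case Nil then show ?thesis by simp
    next
      case (Cons z h')
      then show ?thesis using h by (auto simp: ball_def Tset_def Gset_Cons)
    qed
  qed
next
  show "insert [] (\<Union>z\<in>{..<k}. Tset k K z n) \<subseteq> ball k K (Suc n)"
    by (auto simp: ball_def Tset_def)
qed

lemma ball_card_P:
  shows "card (P (ball k K (Suc n))) \<le> card (UNIV :: 'a set) * (\<Prod>z\<in>{..<k}. card (P (Tset k K z n)))"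
proof -
  have "card (P (ball k K (Suc n))) \<le> card (P {[]}) * (\<Prod>z\<in>{..<k}. card (P (Tset k K z n)))"
  proof (rule split_card[where pre = "\<lambda>_. []"])
    show "{[]} \<subseteq> ball k K (Suc n)" by (simp add: ball_def)
    fix w assume "w \<in> ball k K (Suc n)"
    then show "w \<in> {[]} \<or> (\<exists>v\<in>{..<k}. \<exists>w'\<in>Tset k K v n. w = [] @ w')"
      using ball_Suc by auto
  next
    fix v w' assume "v \<in> {..<k}" "w' \<in> Tset k K v n"
    then show "[] @ w' \<in> ball k K (Suc n)" using ball_Suc by auto
  qed (auto simp: finite_Tset)
  also have "\<dots> \<le> card (UNIV :: 'a set) * (\<Prod>z\<in>{..<k}. card (P (Tset k K z n)))"
    by (rule mult_right_mono[OF card_P_single]) simp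
  finally show ?thesis .
qed

lemma full_Tset_ball:
  assumes F: "F < k" "\<forall>j<k. K F j = 1"
  shows "Tset k K F n = Cons F ` ball k K n"
proof
  show "Tset k K F n \<subseteq> Cons F ` ball k K n"
    by (auto simp: Tset_def ball_def Gset_Cons)
next
  show "Cons F ` ball k K n \<subseteq> Tset k K F n"
  proof
    fix w assume "w \<in> Cons F ` ball k K n"
    then obtain h where h: "w = F # h" "h \<in> Gset k K" "length h \<le> n" by (auto simp: ball_def)
    have "h \<noteq> [] \<Longrightarrow> hd h < k" using Gset_set[OF h(2)] by (cases h) auto
    then have "F # h \<in> Gset k K" using h(2) F by (auto simp: Gset_Cons)
    then show "w \<in> Tset k K F n" using h by (auto simp: Tset_def)
  qed
qed

lemma card_ball_full:
  assumes F: "F < k" "\<forall>j<k. K F j = 1"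
  shows "card (ball k K n) = card (Tset k K F n)"
  using full_Tset_ball[OF F] by (simp add: card_image)

lemma P_full_le_ball:
  assumes F: "F < k" "\<forall>j<k. K F j = 1"
  shows "card (P (Tset k K F n)) \<le> card (P (ball k K n))"
proof -
  define \<psi> :: "(nat list \<Rightarrow> 'a) \<Rightarrow> (nat list \<Rightarrow> 'a)" where
    "\<psi> = (\<lambda>u h. if h \<in> ball k K n then u (F # h) else undefined)"
  have TB: "Tset k K F n = Cons F ` ball k K n" by (rule full_Tset_ball[OF F])
  have img: "\<psi> ` P (Tset k K F n) \<subseteq> P (ball k K n)"
  proof
    fix p assume "p \<in> \<psi> ` P (Tset k K F n)"
    then obtain u where u: "u \<in> P (Tset k K F n)" "p = \<psi> u" by blast
    then obtain t g where tg: "t \<in> X" "g \<in> Gset k K" "u = (\<lambda>h. if h \<in> Tset k K F n then t (gmult K g h) else undefined)"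
      by (auto simp: accepted_patterns_def)
    have "p = (\<lambda>h. if h \<in> ball k K n then t (gmult K (push K g F) h) else undefined)"
      using u(2) tg(3) TB by (intro ext) (auto simp: \<psi>_def)
    moreover have "push K g F \<in> Gset k K" using push_Gset[OF tg(2) F(1)] .
    ultimately show "p \<in> P (ball k K n)" using tg(1) unfolding accepted_patterns_def by blast
  qed
  have inj: "inj_on \<psi> (P (Tset k K F n))"
  proof
    fix u1 u2 assume u1: "u1 \<in> P (Tset k K F n)" and u2: "u2 \<in> P (Tset k K F n)" and eq: "\<psi> u1 = \<psi> u2"
    show "u1 = u2"
    proof
      fix w show "u1 w = u2 w"
      proof (cases "w \<in> Tset k K F n")
        case False then show ?thesis using P_out u1 u2 by metis
      next
        case True
        then obtain h where "h \<in> ball k K n" "w = F # h" using TB by auto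
        then show ?thesis using fun_cong[OF eq, of h] by (simp add: \<psi>_def)
      qed
    qed
  qed
  have "card (P (Tset k K F n)) = card (\<psi> ` P (Tset k K F n))" using card_image[OF inj] by simp
  also have "\<dots> \<le> card (P (ball k K n))" by (rule card_mono[OF finite_P[OF finite_ball] img])
  finally show ?thesis .
qed

definition Lev where "Lev y j = {w \<in> Gset k K. \<exists>h. w = y # h \<and> length h = j}"

lemma Lev_sub: "Lev y j \<subseteq> Tset k K y j" by (auto simp: Lev_def Tset_def)
lemma finite_Lev: "finite (Lev y j)" using finite_subset[OF Lev_sub finite_Tset] .

lemma band_cover:
  assumes "w \<in> Tset k K y (D + 1 + b)" "w \<notin> Tset k K y D"
  shows "\<exists>v\<in>Lev y (D+1). \<exists>w'\<in>Tset k K (last v) b. w = butlast v @ w'"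
proof -
  obtain h where h: "w = y # h" "y # h \<in> Gset k K" "length h \<le> D + 1 + b" using assms(1) by (auto simp: Tset_def)
  have lh: "length h > D"
  proof (rule ccontr)
    assume "\<not> length h > D"
    then have "w \<in> Tset k K y D" using h unfolding Tset_def by auto
    then show False using assms(2) by blast
  qed
  define h1 where "h1 = take (D+1) h"
  define h2 where "h2 = drop (D+1) h"
  have hh: "h = h1 @ h2" unfolding h1_def h2_def by simp
  have l1: "length h1 = D + 1" using lh unfolding h1_def by simp
  then have ne: "h1 \<noteq> []" by auto
  have l2: "length h2 \<le> b" using h(3) lh unfolding h2_def by simp
  have wsplit: "y # h = (y # butlast h1) @ (last h1 # h2)" using hh ne
    by (metis append_butlast_last_id append_Cons append_assoc append_Cons append_self_conv2)
  have G1: "(y # h1) @ h2 \<in> Gset k K" using h(2) hh by (metis append_Cons)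
  then have G1': "y # h1 \<in> Gset k K" using Gset_append by blast
  have "(y # butlast h1) @ (last h1 # h2) \<in> Gset k K" using h(2) wsplit by metis
  then have G2: "last h1 # h2 \<in> Gset k K" using Gset_append by blast
  have v: "y # h1 \<in> Lev y (D+1)" using G1' l1 unfolding Lev_def by blast
  have lv: "last (y # h1) = last h1" using ne by simp
  have "last h1 # h2 \<in> Tset k K (last (y # h1)) b" using G2 l2 unfolding Tset_def lv by blast
  moreover have "w = butlast (y # h1) @ (last h1 # h2)" using wsplit ne h(1) by simp
  ultimately show ?thesis using v by blast
qed

lemma band_into:
  assumes v: "v \<in> Lev y (D+1)" and w': "w' \<in> Tset k K (last v) b"
  shows "butlast v @ w' \<in> Tset k K y (D + 1 + b)" and "length (butlast v @ w') > D + 1"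
proof -
  obtain h where h: "v = y # h" "v \<in> Gset k K" "length h = D + 1" using v by (auto simp: Lev_def)
  obtain r where r: "w' = last v # r" "last v # r \<in> Gset k K" "length r \<le> b" using w' by (auto simp: Tset_def)
  have e: "butlast v @ w' = v @ r" using r(1) h(1) by simp
  have "r \<in> Gset k K" "r \<noteq> [] \<longrightarrow> K (last v) (hd r) = 1" using r(2) by (auto simp: Gset_Cons)
  then have "v @ r \<in> Gset k K" using h(2) Gset_append[of v r k K] h(1) by auto
  then show "butlast v @ w' \<in> Tset k K y (D + 1 + b)" using e h r(3) by (auto simp: Tset_def)
  show "length (butlast v @ w') > D + 1" using e h by simp
qed

lemma band_card_P: assumes "y < k"
  shows "card (P (Tset k K y (D + 1 + b))) \<le> card (P (Tset k K y D)) * (\<Prod>v\<in>Lev y (D+1). card (P (Tset k K (last v) b)))"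
proof (rule split_card[where pre = butlast])
  show "Tset k K y D \<subseteq> Tset k K y (D + 1 + b)" by (auto simp: Tset_def)
  fix w assume "w \<in> Tset k K y (D + 1 + b)"
  then show "w \<in> Tset k K y D \<or> (\<exists>v\<in>Lev y (D+1). \<exists>w'\<in>Tset k K (last v) b. w = butlast v @ w')"
    using band_cover by blast
next
  fix v w' assume "v \<in> Lev y (D+1)" "w' \<in> Tset k K (last v) b"
  then show "butlast v @ w' \<in> Tset k K y (D + 1 + b)" by (rule band_into)
next
  fix v assume "v \<in> Lev y (D+1)"
  then have "set v \<subseteq> {..<k}" by (auto simp: Lev_def Gset_def)
  then show "set (butlast v) \<subseteq> {..<k}" by (meson in_set_butlastD subset_iff)
qed (auto simp: finite_Tset finite_Lev)

lemma band_card_T: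
  "card (Tset k K y D) + (\<Sum>v\<in>Lev y (D+1). card (Tset k K (last v) b)) \<le> card (Tset k K y (D + 1 + b))"
proof -
  define U where "U = (\<Union>v\<in>Lev y (D+1). (\<lambda>w'. butlast v @ w') ` Tset k K (last v) b)"
  have sub: "Tset k K y D \<union> U \<subseteq> Tset k K y (D + 1 + b)"
    using band_into(1) by (auto simp: U_def Tset_def)
  have dj1: "Tset k K y D \<inter> U = {}"
  proof -
    have "\<And>w. w \<in> U \<Longrightarrow> length w > D + 1" using band_into(2) by (auto simp: U_def)
    moreover have "\<And>w. w \<in> Tset k K y D \<Longrightarrow> length w \<le> D + 1" by (auto simp: Tset_def)
    ultimately show ?thesis by fastforce
  qed
  have dj2: "\<forall>v1\<in>Lev y (D+1). \<forall>v2\<in>Lev y (D+1). v1 \<noteq> v2 \<longrightarrow>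
      (\<lambda>w'. butlast v1 @ w') ` Tset k K (last v1) b \<inter> (\<lambda>w'. butlast v2 @ w') ` Tset k K (last v2) b = {}"
  proof (intro ballI impI)
    fix v1 v2 assume v1: "v1 \<in> Lev y (D+1)" and v2: "v2 \<in> Lev y (D+1)" and ne: "v1 \<noteq> v2"
    show "(\<lambda>w'. butlast v1 @ w') ` Tset k K (last v1) b \<inter> (\<lambda>w'. butlast v2 @ w') ` Tset k K (last v2) b = {}"
    proof (rule ccontr)
      assume "\<not> ?thesis"
      then obtain w1 w2 where w: "w1 \<in> Tset k K (last v1) b" "w2 \<in> Tset k K (last v2) b" "butlast v1 @ w1 = butlast v2 @ w2"
        by blast
      obtain r1 where r1: "w1 = last v1 # r1" using w(1) by (auto simp: Tset_def)
      obtain r2 where r2: "w2 = last v2 # r2" using w(2) by (auto simp: Tset_def)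
      have ne1: "v1 \<noteq> []" "v2 \<noteq> []" using v1 v2 by (auto simp: Lev_def)
      have "v1 @ r1 = v2 @ r2" using w(3) r1 r2 ne1 by (metis append_butlast_last_id append_Cons append_assoc self_append_conv2)
      moreover have "length v1 = length v2" using v1 v2 by (auto simp: Lev_def)
      ultimately show False using ne by (simp add: append_eq_append_conv)
    qed
  qed
  have cU: "card U = (\<Sum>v\<in>Lev y (D+1). card (Tset k K (last v) b))"
  proof -
    have "card U = (\<Sum>v\<in>Lev y (D+1). card ((\<lambda>w'. butlast v @ w') ` Tset k K (last v) b))"
      unfolding U_def by (rule card_UN_disjoint[OF finite_Lev]) (auto simp: finite_Tset dj2)
    also have "\<dots> = (\<Sum>v\<in>Lev y (D+1). card (Tset k K (last v) b))"
      by (rule sum.cong) (auto simp: card_image inj_on_def)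
    finally show ?thesis .
  qed
  have finU: "finite U" unfolding U_def by (auto simp: finite_Lev finite_Tset)
  have "card (Tset k K y D) + card U = card (Tset k K y D \<union> U)"
    by (rule card_Un_disjoint[symmetric]) (auto simp: finite_Tset finU dj1)
  also have "\<dots> \<le> card (Tset k K y (D + 1 + b))" by (rule card_mono[OF finite_Tset sub])
  finally show ?thesis using cU by simp
qed

end



context TS begin

lemma path_exists:
  "kpow k K j i l > 0 \<Longrightarrow> i < k \<Longrightarrow> l < k \<Longrightarrow> \<exists>h. i # h \<in> Gset k K \<and> last (i # h) = l \<and> length h = j"
proof (induction j arbitrary: l)
  case 0
  then have "i = l" by (auto split: if_splits)
  then show ?case using 0 by (intro exI[of _ "[]"]) (simp add: Gset_Cons)
next
  case (Suc j)
  have "(\<Sum>l'<k. kpow k K j i l' * K l' l) > 0" using Suc.prems(1) by simp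
  then obtain l' where l': "l' < k" "kpow k K j i l' * K l' l > 0"
    using sum_pos_lt_pair by (metis (no_types, lifting) lessThan_iff not_gr_zero sum.neutral)
  then have p: "kpow k K j i l' > 0" "K l' l > 0" by auto
  then have Kl: "K l' l = 1" using K01 l'(1) Suc.prems(3) by fastforce
  obtain h where h: "i # h \<in> Gset k K" "last (i # h) = l'" "length h = j" using Suc.IH[OF p(1) Suc.prems(2) l'(1)] by blast
  have "[l] \<in> Gset k K" using Suc.prems(3) by (simp add: Gset_Cons)
  then have "(i # h) @ [l] \<in> Gset k K" using h Kl Gset_append[of "i # h" "[l]" k K] by simp
  then show ?case using h by (intro exI[of _ "h @ [l]"]) simp
qed

end

locale TSA = TSX k K X for k K and X :: "(nat list \<Rightarrow> 'a::finite) set" +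
  fixes F m :: nat
  assumes XNE: "X \<noteq> {}" and F: "F < k" and full: "\<forall>j<k. K F j = 1"
    and m1: "m \<ge> 1" and prim: "\<forall>i<k. \<forall>j<k. kpow k K m i j > 0"
begin

definition s :: "nat \<Rightarrow> nat \<Rightarrow> real" where "s y n = real (card (Tset k K y n))"

lemma s_ge1: "y < k \<Longrightarrow> s y n \<ge> 1"
proof -
  assume "y < k"
  then have "card (Tset k K y n) \<noteq> 0" using Tset_self finite_Tset by (metis card_0_eq empty_iff)
  then show ?thesis by (simp add: s_def)
qed

lemma s_nonneg[simp]: "0 \<le> s y n" by (simp add: s_def)

lemma s_Suc: "y < k \<Longrightarrow> s y (Suc n) = 1 + (\<Sum>z\<in>Sc y. s z n)"
  by (simp add: s_def card_Tset_Suc)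

lemma Sc_sub: "Sc y \<subseteq> {..<k}" by (auto simp: Sc_def)

lemma Sc_F: "Sc F = {..<k}" using full by (auto simp: Sc_def)

lemma Sc_ne: assumes "y < k" shows "\<exists>z. z \<in> Sc y"
proof -
  obtain h where h: "y # h \<in> Gset k K" "length h = m" using path_exists[OF prim[rule_format, OF assms F] assms F] by blast
  then obtain z h' where "h = z # h'" using m1 by (cases h) auto
  then show ?thesis using h by (auto simp: Gset_Cons Sc_def)
qed

lemma s_ge_n: "y < k \<Longrightarrow> s y n \<ge> real n + 1"
proof (induction n arbitrary: y)
  case 0 then show ?case using s_ge1 by simp
next
  case (Suc n)
  obtain z where z: "z \<in> Sc y" using Sc_ne[OF Suc.prems] by blast
  then have zk: "z < k" by (simp add: Sc_def)
  have "s z n \<le> (\<Sum>z\<in>Sc y. s z n)"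
    by (rule member_le_sum[OF z]) (auto simp: finite_Sc)
  then show ?case using Suc.IH[OF zk] s_Suc[OF Suc.prems] by simp
qed

lemma s_le_F: assumes "x < k" shows "s x n \<le> s F n"
proof -
  have "Tset k K x n \<subseteq> Cons x ` ball k K n"
    by (auto simp: Tset_def ball_def Gset_Cons)
  then have "card (Tset k K x n) \<le> card (Cons x ` ball k K n)"
    by (intro card_mono) (auto simp: finite_ball)
  also have "\<dots> = card (ball k K n)" by (simp add: card_image)
  also have "\<dots> = card (Tset k K F n)" by (rule card_ball_full[OF F full])
  finally show ?thesis by (simp add: s_def)
qed

lemma s_F_Suc: "s F (Suc n) \<le> (real k + 1) * s F n" "s F n + 1 \<le> s F (Suc n)"
proof -
  have "(\<Sum>z\<in>Sc F. s z n) \<le> (\<Sum>z\<in>{..<k}. s F n)" unfolding Sc_F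
    by (rule sum_mono) (simp add: s_le_F)
  then show "s F (Suc n) \<le> (real k + 1) * s F n" using s_Suc[OF F, of n] s_ge1[OF F, of n]
    by (simp add: algebra_simps)
  have "s F n \<le> (\<Sum>z\<in>Sc F. s z n)"
    by (rule member_le_sum) (use F s_ge1 Sc_F in auto)
  then show "s F n + 1 \<le> s F (Suc n)" using s_Suc[OF F, of n] by simp
qed

lemma s_F_mono: "n \<le> n' \<Longrightarrow> s F n \<le> s F n'"
proof (induction n' rule: dec_induct)
  case (step n')
  then show ?case using s_F_Suc(2)[of n'] by linarith
qed simp

lemma s_F_add: "s F (n + j) \<le> (real k + 1) ^ j * s F n"
proof (induction j)
  case 0 then show ?case by simp
next
  case (Suc j)
  have "s F (n + Suc j) \<le> (real k + 1) * s F (n + j)" using s_F_Suc(1)[of "n+j"] by simp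
  also have "\<dots> \<le> (real k + 1) * ((real k + 1) ^ j * s F n)" by (rule mult_left_mono[OF Suc.IH]) simp
  finally show ?case by (simp add: algebra_simps)
qed

lemma s_ge_F_shift: assumes "x < k" "m \<le> n" shows "s F (n - m) \<le> s x n"
proof -
  obtain h where h: "x # h \<in> Gset k K" "last (x # h) = F" "length h = m"
    using path_exists[OF prim[rule_format, OF assms(1) F] assms(1) F] by blast
  define w where "w = x # h"
  have img: "(\<lambda>v. butlast w @ v) ` Tset k K F (n - m) \<subseteq> Tset k K x n"
  proof
    fix u assume "u \<in> (\<lambda>v. butlast w @ v) ` Tset k K F (n - m)"
    then obtain r where r: "u = butlast w @ (F # r)" "F # r \<in> Gset k K" "length r \<le> n - m"
      by (auto simp: Tset_def)
    have e: "u = w @ r" using r(1) h(2) unfolding w_def by (metis append_butlast_last_id append_Cons append_assoc append_self_conv2 list.distinct(1))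
    have "r \<in> Gset k K" "r \<noteq> [] \<longrightarrow> K F (hd r) = 1" using r(2) by (auto simp: Gset_Cons)
    then have "w @ r \<in> Gset k K" using h Gset_append[of w r k K] unfolding w_def by auto
    then show "u \<in> Tset k K x n" using e r(3) h(3) assms(2) unfolding w_def Tset_def by auto
  qed
  have "card (Tset k K F (n - m)) = card ((\<lambda>v. butlast w @ v) ` Tset k K F (n - m))"
    by (rule card_image[symmetric]) (simp add: inj_on_def)
  also have "\<dots> \<le> card (Tset k K x n)" by (rule card_mono[OF finite_Tset img])
  finally show ?thesis by (simp add: s_def)
qed

lemma s_F_le_x: assumes "x < k" "m \<le> n" shows "s F (n + m) \<le> (real k + 1) ^ (2 * m) * s x n"
proof -
  have "s F (n + m) = s F ((n - m) + 2 * m)" using assms(2) by (simp add: algebra_simps)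
  also have "\<dots> \<le> (real k + 1) ^ (2 * m) * s F (n - m)" by (rule s_F_add)
  also have "\<dots> \<le> (real k + 1) ^ (2 * m) * s x n" by (rule mult_left_mono[OF s_ge_F_shift[OF assms]]) simp
  finally show ?thesis .
qed


definition cP :: "nat \<Rightarrow> nat \<Rightarrow> nat" where "cP y n = card (P (Tset k K y n))"
definition U :: "nat \<Rightarrow> nat \<Rightarrow> real" where "U y n = ln (real (cP y n))"
definition r :: "nat \<Rightarrow> nat \<Rightarrow> real" where "r y n = U y n / s y n"
definition R :: "nat \<Rightarrow> real" where "R n = Max ((\<lambda>y. r y n) ` {..<k})"
definition CA :: real where "CA = real (card (UNIV :: 'a set))"

lemma cP_pos: "cP y n \<ge> 1"
proof -
  have "P (Tset k K y n) \<noteq> {}" using P_nonempty[OF XNE] .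
  moreover have "finite (P (Tset k K y n))" by (rule finite_P[OF finite_Tset])
  ultimately show ?thesis unfolding cP_def by (simp add: Suc_le_eq card_gt_0_iff)
qed

lemma cP_gt0: "0 < cP y n" using cP_pos[of y n] by simp

lemma U_nonneg: "U y n \<ge> 0" using cP_pos by (simp add: U_def)

lemma CA_ge1: "CA \<ge> 1"
proof -
  have "card (UNIV :: 'a set) > 0" by (simp add: card_gt_0_iff)
  then show ?thesis by (simp add: CA_def)
qed

lemma k_pos: "k > 0" using F by simp

lemma r_le_R: "y < k \<Longrightarrow> r y n \<le> R n"
  unfolding R_def by (rule Max_ge) auto

lemma R_attained: "\<exists>y<k. r y n = R n"
proof -
  have "R n \<in> (\<lambda>y. r y n) ` {..<k}" unfolding R_def by (rule Max_in) (use k_pos in auto)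
  then show ?thesis by auto
qed

lemma U_le_R: assumes "y < k" shows "U y n \<le> R n * s y n"
proof -
  have "U y n / s y n \<le> R n" using r_le_R[OF assms] by (simp add: r_def)
  then show ?thesis using s_ge1[OF assms, of n] by (simp add: divide_le_eq)
qed

lemma r_nonneg: "r y n \<ge> 0" using U_nonneg by (simp add: r_def)

lemma R_nonneg: "R n \<ge> 0" using r_le_R[OF F, of n] r_nonneg[of F n] by linarith

lemma ln_le_nat: "1 \<le> a \<Longrightarrow> a \<le> b \<Longrightarrow> ln (real a) \<le> ln (real b)"
  by simp

lemma U_step: assumes "y < k" shows "U y (Suc n) \<le> ln CA + (\<Sum>z\<in>Sc y. U z n)"
proof -
  have "ln (real (cP y (Suc n))) \<le> ln (real (card (UNIV :: 'a set) * (\<Prod>z\<in>Sc y. cP z n)))"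
    by (rule ln_le_nat[OF cP_pos]) (use step_card[OF assms, of n] in \<open>simp add: cP_def\<close>)
  also have "\<dots> = ln (CA * (\<Prod>z\<in>Sc y. real (cP z n)))" by (simp add: CA_def)
  also have "\<dots> = ln CA + ln (\<Prod>z\<in>Sc y. real (cP z n))"
  proof -
    have "(\<Prod>z\<in>Sc y. real (cP z n)) > 0" using cP_pos by (intro prod_pos) (simp add: Suc_le_eq)
    then show ?thesis using CA_ge1 by (simp add: ln_mult)
  qed
  also have "ln (\<Prod>z\<in>Sc y. real (cP z n)) = (\<Sum>z\<in>Sc y. U z n)"
    unfolding U_def by (rule ln_prod) (use cP_gt0 finite_Sc in \<open>auto\<close>)
  finally show ?thesis by (simp add: U_def)
qed

lemma last_Lev: assumes "v \<in> Lev y j" shows "last v < k"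
proof -
  have "v \<in> Gset k K" "v \<noteq> []" using assms by (auto simp: Lev_def)
  then show ?thesis using Gset_set last_in_set by blast
qed

lemma U_band: assumes "y < k"
  shows "U y (D + 1 + b) \<le> U y D + (\<Sum>v\<in>Lev y (D+1). U (last v) b)"
proof -
  have "ln (real (cP y (D + 1 + b))) \<le> ln (real (cP y D * (\<Prod>v\<in>Lev y (D+1). cP (last v) b)))"
    by (rule ln_le_nat[OF cP_pos]) (use band_card_P[OF assms, of D b] in \<open>simp add: cP_def\<close>)
  also have "\<dots> = ln (real (cP y D) * (\<Prod>v\<in>Lev y (D+1). real (cP (last v) b)))" by simp
  also have "\<dots> = U y D + ln (\<Prod>v\<in>Lev y (D+1). real (cP (last v) b))"
  proof -
    have "(\<Prod>v\<in>Lev y (D+1). real (cP (last v) b)) > 0" using cP_pos by (intro prod_pos) (simp add: Suc_le_eq)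
    moreover have "real (cP y D) > 0" using cP_pos[of y D] by simp
    ultimately show ?thesis unfolding U_def by (simp add: ln_mult)
  qed
  also have "ln (\<Prod>v\<in>Lev y (D+1). real (cP (last v) b)) = (\<Sum>v\<in>Lev y (D+1). U (last v) b)"
    unfolding U_def by (rule ln_prod) (use cP_gt0 finite_Lev in \<open>auto\<close>)
  finally show ?thesis by (simp add: U_def)
qed

lemma s_band: "s y D + (\<Sum>v\<in>Lev y (D+1). s (last v) b) \<le> s y (D + 1 + b)"
proof -
  have "real (card (Tset k K y D) + (\<Sum>v\<in>Lev y (D+1). card (Tset k K (last v) b))) \<le> real (card (Tset k K y (D + 1 + b)))"
    using band_card_T[of y D b] by linarith
  then show ?thesis by (simp add: s_def)
qed

lemma band_iter: assumes "y < k"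
  shows "U y (a + q * (b + 1)) \<le> U y a + R b * (s y (a + q * (b + 1)) - s y a)"
proof (induction q)
  case 0 then show ?case by simp
next
  case (Suc q)
  define D where "D = a + q * (b + 1)"
  have e: "a + Suc q * (b + 1) = D + 1 + b" by (simp add: D_def)
  have "(\<Sum>v\<in>Lev y (D+1). U (last v) b) \<le> (\<Sum>v\<in>Lev y (D+1). R b * s (last v) b)"
    by (rule sum_mono) (simp add: U_le_R last_Lev)
  also have "\<dots> = R b * (\<Sum>v\<in>Lev y (D+1). s (last v) b)" by (simp add: sum_distrib_left)
  also have "\<dots> \<le> R b * (s y (D + 1 + b) - s y D)"
    by (rule mult_left_mono) (use s_band[of y D b] R_nonneg in auto)
  finally have "(\<Sum>v\<in>Lev y (D+1). U (last v) b) \<le> R b * (s y (D + 1 + b) - s y D)" .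
  then have "U y (D + 1 + b) \<le> U y D + R b * (s y (D + 1 + b) - s y D)" using U_band[OF assms, of D b] by linarith
  then show ?case using Suc.IH unfolding e D_def[symmetric] by (simp add: algebra_simps)
qed

definition Cb :: "nat \<Rightarrow> real" where "Cb b = (\<Sum>a\<le>b. \<Sum>y<k. U y a)"

lemma Cb_nonneg: "Cb b \<ge> 0" unfolding Cb_def by (intro sum_nonneg) (simp add: U_nonneg)

lemma U_le_Cb: assumes "y < k" "a \<le> b" shows "U y a \<le> Cb b"
proof -
  have "U y a \<le> (\<Sum>y<k. U y a)" by (rule member_le_sum) (use assms U_nonneg in auto)
  also have "\<dots> \<le> (\<Sum>a\<le>b. \<Sum>y<k. U y a)"
    by (rule member_le_sum[where f = "\<lambda>a. \<Sum>y<k. U y a"]) (use assms in \<open>auto intro!: sum_nonneg U_nonneg\<close>)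
  finally show ?thesis by (simp add: Cb_def)
qed

lemma U_le_C: assumes "y < k" shows "U y n \<le> Cb b + R b * s y n"
proof -
  define a where "a = n mod (b + 1)"
  define q where "q = n div (b + 1)"
  have n: "n = a + q * (b + 1)" unfolding a_def q_def by (metis mod_div_mult_eq)
  have ab: "a \<le> b" unfolding a_def using mod_less_divisor[of "b+1" n] by linarith
  have "U y n \<le> U y a + R b * (s y n - s y a)" using band_iter[OF assms, of a q b] n by simp
  also have "\<dots> \<le> Cb b + R b * s y n"
  proof -
    have "R b * s y a \<ge> 0" by (rule mult_nonneg_nonneg[OF R_nonneg s_nonneg])
    then show ?thesis using U_le_Cb[OF assms ab] by (simp add: right_diff_distrib)
  qed
  finally show ?thesis .
qed

lemma r_le: assumes "y < k" shows "r y n \<le> R b + Cb b / (real n + 1)"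
proof -
  have sp: "s y n > 0" using s_ge1[OF assms] by (smt (verit))
  have "r y n = U y n / s y n" by (simp add: r_def)
  also have "\<dots> \<le> (Cb b + R b * s y n) / s y n" by (rule divide_right_mono[OF U_le_C[OF assms]]) (use sp in simp)
  also have "\<dots> = R b + Cb b / s y n" using sp by (simp add: field_simps)
  also have "\<dots> \<le> R b + Cb b / (real n + 1)"
    using s_ge_n[OF assms, of n] Cb_nonneg[of b] by (simp add: frac_le)
  finally show ?thesis .
qed

definition Rinf :: real where "Rinf = Inf (range R)"

lemma bdd_R: "bdd_below (range R)" using R_nonneg by (intro bdd_belowI[of _ 0]) auto

lemma Rinf_le: "Rinf \<le> R n" unfolding Rinf_def by (rule cInf_lower[OF _ bdd_R]) simp

lemma Rinf_nonneg: "Rinf \<ge> 0" unfolding Rinf_def by (rule cInf_greatest) (auto simp: R_nonneg)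

lemma R_upper: assumes "\<epsilon> > 0" shows "\<exists>N. \<forall>n\<ge>N. R n \<le> Rinf + \<epsilon>"
proof -
  have "Inf (range R) < Rinf + \<epsilon> / 2" using assms by (simp add: Rinf_def)
  then obtain b where b: "R b < Rinf + \<epsilon> / 2" using cInf_lessD[of "range R"] by auto
  obtain N :: nat where N: "real N > 2 * Cb b / \<epsilon>" using reals_Archimedean2 by blast
  have "\<forall>n\<ge>N. R n \<le> Rinf + \<epsilon>"
  proof (intro allI impI)
    fix n assume n: "N \<le> n"
    obtain y where y: "y < k" "r y n = R n" using R_attained by blast
    have "Cb b / (real n + 1) \<le> \<epsilon> / 2"
    proof -
      have "2 * Cb b / \<epsilon> < real n + 1" using N n by linarith
      then have "2 * Cb b < (real n + 1) * \<epsilon>" using assms by (simp add: divide_less_eq)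
      then show ?thesis by (simp add: divide_le_eq field_simps)
    qed
    then show "R n \<le> Rinf + \<epsilon>" using r_le[OF y(1), of n b] y(2) b by linarith
  qed
  then show ?thesis by blast
qed


definition Def :: "nat \<Rightarrow> nat \<Rightarrow> real" where "Def y n = Rinf * s y n - U y n"

lemma lnCA_nonneg: "ln CA \<ge> 0" using CA_ge1 by simp

lemma def_step:
  assumes y: "y < k" and z: "z \<in> Sc y" and Rn: "R n \<le> Rinf + \<epsilon>" and e: "\<epsilon> \<ge> 0"
  shows "Def z n \<le> Def y (Suc n) + ln CA + \<epsilon> * s y (Suc n)"
proof -
  have zk: "z < k" using z by (simp add: Sc_def)
  define S' where "S' = (\<Sum>z'\<in>Sc y - {z}. s z' n)"
  define V' where "V' = (\<Sum>z'\<in>Sc y - {z}. U z' n)"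
  have sU: "(\<Sum>z'\<in>Sc y. U z' n) = U z n + V'" unfolding V'_def by (rule sum.remove[OF finite_Sc z])
  have sS: "(\<Sum>z'\<in>Sc y. s z' n) = s z n + S'" unfolding S'_def by (rule sum.remove[OF finite_Sc z])
  have "V' \<le> (\<Sum>z'\<in>Sc y - {z}. R n * s z' n)" unfolding V'_def
    by (rule sum_mono) (auto simp: Sc_def U_le_R)
  also have "\<dots> = R n * S'" by (simp add: S'_def sum_distrib_left)
  finally have V: "V' \<le> R n * S'" .
  have S'0: "S' \<ge> 0" unfolding S'_def by (rule sum_nonneg) simp
  have p1: "R n * S' \<le> Rinf * S' + \<epsilon> * S'" using mult_right_mono[OF Rn S'0] by (simp add: algebra_simps)
  have sy: "s y (Suc n) = 1 + s z n + S'" using s_Suc[OF y] sS by simp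
  have p2: "\<epsilon> * S' \<le> \<epsilon> * s y (Suc n)" using sy s_nonneg[of z n] e by (intro mult_left_mono) auto
  have p3: "Rinf * s y (Suc n) = Rinf + Rinf * s z n + Rinf * S'" using sy by (simp add: algebra_simps)
  have st: "U y (Suc n) \<le> ln CA + U z n + V'" using U_step[OF y, of n] sU by simp
  show ?thesis unfolding Def_def using V p1 p2 p3 st Rinf_nonneg by linarith
qed

lemma def_multi:
  assumes e: "\<epsilon> \<ge> 0" and RN: "\<forall>n\<ge>N. R n \<le> Rinf + \<epsilon>"
  shows "x < k \<Longrightarrow> y < k \<Longrightarrow> kpow k K j y x > 0 \<Longrightarrow> n \<ge> N \<Longrightarrow>
    Def x n \<le> Def y (n + j) + real j * (ln CA + \<epsilon> * s F (n + j))"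
proof (induction j arbitrary: x n)
  case 0
  then have "x = y" by (auto split: if_splits)
  then show ?case by simp
next
  case (Suc j)
  have "(\<Sum>l<k. kpow k K j y l * K l x) > 0" using Suc.prems(3) by simp
  then obtain l where l: "l < k" "kpow k K j y l * K l x > 0"
    by (metis (no_types, lifting) lessThan_iff not_gr_zero sum.neutral)
  then have p: "kpow k K j y l > 0" "K l x > 0" by auto
  then have "K l x = 1" using K01 l(1) Suc.prems(1) by fastforce
  then have xS: "x \<in> Sc l" using Suc.prems(1) by (simp add: Sc_def)
  have d1: "Def x n \<le> Def l (Suc n) + ln CA + \<epsilon> * s l (Suc n)"
    by (rule def_step[OF l(1) xS _ e]) (use RN Suc.prems(4) in auto)
  have d2: "Def l (Suc n) \<le> Def y (Suc n + j) + real j * (ln CA + \<epsilon> * s F (Suc n + j))"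
    by (rule Suc.IH[OF l(1) Suc.prems(2) p(1)]) (use Suc.prems(4) in auto)
  have "s l (Suc n) \<le> s F (Suc n)" by (rule s_le_F[OF l(1)])
  also have "\<dots> \<le> s F (n + Suc j)" by (rule s_F_mono) simp
  finally have "\<epsilon> * s l (Suc n) \<le> \<epsilon> * s F (n + Suc j)" using e by (rule mult_left_mono)
  moreover have "Suc n + j = n + Suc j" by simp
  ultimately show ?case using d1 d2 by (simp add: algebra_simps)
qed

lemma lower: assumes "\<epsilon> > 0" shows "\<exists>N. \<forall>n\<ge>N. \<forall>x<k. r x n \<ge> Rinf - \<epsilon>"
proof -
  define M' where "M' = real m * (real k + 1) ^ (2 * m)"
  have M'pos: "M' > 0" using m1 unfolding M'_def by simp
  define e' where "e' = \<epsilon> / (2 * M')"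
  have e'pos: "e' > 0" using assms M'pos by (simp add: e'_def)
  obtain N1 where N1: "\<forall>n\<ge>N1. R n \<le> Rinf + e'" using R_upper[OF e'pos] by blast
  obtain N2 :: nat where N2: "real N2 > 2 * real m * ln CA / \<epsilon>" using reals_Archimedean2 by blast
  define N where "N = max (max N1 m) N2"
  have "\<forall>n\<ge>N. \<forall>x<k. r x n \<ge> Rinf - \<epsilon>"
  proof (intro allI impI)
    fix n x assume n: "N \<le> n" and x: "x < k"
    obtain y where y: "y < k" "r y (n + m) = R (n + m)" using R_attained by blast
    have sy: "s y (n + m) > 0" using s_ge1[OF y(1)] by (smt (verit))
    have "Rinf \<le> U y (n + m) / s y (n + m)" using Rinf_le[of "n+m"] y(2) by (simp add: r_def)
    then have "Rinf * s y (n + m) \<le> U y (n + m)" using sy by (simp add: le_divide_eq)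
    then have d0: "Def y (n + m) \<le> 0" by (simp add: Def_def)
    have A: "Def x n \<le> Def y (n + m) + real m * (ln CA + e' * s F (n + m))"
      by (rule def_multi[OF _ N1 x y(1) prim[rule_format, OF y(1) x]]) (use e'pos n in \<open>auto simp: N_def\<close>)
    have A': "real m * (ln CA + e' * s F (n + m)) = real m * ln CA + real m * (e' * s F (n + m))"
      by (simp add: distrib_left)
    have "s F (n + m) \<le> (real k + 1) ^ (2 * m) * s x n"
      by (rule s_F_le_x[OF x]) (use n in \<open>simp add: N_def\<close>)
    then have B: "real m * (e' * s F (n + m)) \<le> real m * (e' * ((real k + 1) ^ (2 * m) * s x n))"
      using e'pos by (intro mult_left_mono) auto
    have C: "real m * (e' * ((real k + 1) ^ (2 * m) * s x n)) = \<epsilon> / 2 * s x n"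
      using M'pos m1 unfolding e'_def M'_def by (simp add: field_simps)
    have D: "Def x n \<le> real m * ln CA + \<epsilon> / 2 * s x n" using A A' B C d0 by linarith
    have "2 * real m * ln CA / \<epsilon> < real n + 1" using N2 n unfolding N_def by linarith
    then have "2 * real m * ln CA < (real n + 1) * \<epsilon>" using assms by (simp add: divide_less_eq)
    moreover have "(real n + 1) * \<epsilon> \<le> s x n * \<epsilon>" using s_ge_n[OF x, of n] assms by (intro mult_right_mono) auto
    ultimately have "real m * ln CA \<le> \<epsilon> / 2 * s x n" by (simp add: algebra_simps)
    then have "(Rinf - \<epsilon>) * s x n \<le> U x n" using D unfolding Def_def by (simp add: algebra_simps)
    moreover have "s x n > 0" using s_ge1[OF x] by (smt (verit))
    ultimately show "r x n \<ge> Rinf - \<epsilon>" by (simp add: r_def le_divide_eq)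
  qed
  then show ?thesis by blast
qed

lemma stem_lim: assumes x: "x < k" shows "(\<lambda>n. r x n) \<longlonglongrightarrow> Rinf"
proof (rule LIMSEQ_I)
  fix e :: real assume e: "e > 0"
  obtain N1 where N1: "\<forall>n\<ge>N1. R n \<le> Rinf + e / 2" using R_upper[of "e/2"] e by auto
  obtain N2 where N2: "\<forall>n\<ge>N2. \<forall>x<k. r x n \<ge> Rinf - e / 2" using lower[of "e/2"] e by auto
  have "\<forall>n\<ge>max N1 N2. norm (r x n - Rinf) < e"
  proof (intro allI impI)
    fix n assume "max N1 N2 \<le> n"
    then have "R n \<le> Rinf + e / 2" "r x n \<ge> Rinf - e / 2" using N1 N2 x by auto
    moreover have "r x n \<le> R n" by (rule r_le_R[OF x])
    ultimately show "norm (r x n - Rinf) < e" using e by (simp add: abs_less_iff)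
  qed
  then show "\<exists>no. \<forall>n\<ge>no. norm (r x n - Rinf) < e" by blast
qed

definition rho :: "nat \<Rightarrow> real" where
  "rho n = ln (real (card (P (ball k K n)))) / real (card (ball k K n))"

lemma ball_s: "real (card (ball k K n)) = s F n"
  by (simp add: s_def card_ball_full[OF F full])

lemma cPball_pos: "card (P (ball k K n)) \<ge> 1"
proof -
  have "P (ball k K n) \<noteq> {}" using P_nonempty[OF XNE] .
  moreover have "finite (P (ball k K n))" by (rule finite_P[OF finite_ball])
  ultimately show ?thesis by (simp add: Suc_le_eq card_gt_0_iff)
qed

lemma rho_ge: "rho n \<ge> r F n"
proof -
  have "U F n \<le> ln (real (card (P (ball k K n))))"
    unfolding U_def by (rule ln_le_nat[OF cP_pos]) (simp add: cP_def P_full_le_ball[OF F full])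
  then show ?thesis unfolding rho_def r_def ball_s using s_ge1[OF F, of n]
    by (simp add: divide_right_mono)
qed

lemma rho_le: "rho (Suc n) \<le> R n + ln CA / (real n + 1)"
proof -
  have "ln (real (card (P (ball k K (Suc n))))) \<le> ln (real (card (UNIV :: 'a set) * (\<Prod>z\<in>{..<k}. cP z n)))"
    by (rule ln_le_nat[OF cPball_pos]) (use ball_card_P[of n] in \<open>simp add: cP_def\<close>)
  also have "\<dots> = ln (CA * (\<Prod>z\<in>{..<k}. real (cP z n)))" by (simp add: CA_def)
  also have "\<dots> = ln CA + ln (\<Prod>z\<in>{..<k}. real (cP z n))"
  proof -
    have "(\<Prod>z\<in>{..<k}. real (cP z n)) > 0" using cP_gt0 by (intro prod_pos) simp
    then show ?thesis using CA_ge1 by (intro ln_mult_pos) auto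
  qed
  also have "ln (\<Prod>z\<in>{..<k}. real (cP z n)) = (\<Sum>z<k. U z n)"
    unfolding U_def by (rule ln_prod) (use cP_gt0 in auto)
  also have "(\<Sum>z<k. U z n) \<le> (\<Sum>z<k. R n * s z n)" by (rule sum_mono) (simp add: U_le_R)
  also have "\<dots> = R n * (s F (Suc n) - 1)" using s_Suc[OF F, of n] by (simp add: Sc_F sum_distrib_left)
  finally have L: "ln (real (card (P (ball k K (Suc n))))) \<le> ln CA + R n * (s F (Suc n) - 1)" by simp
  have sp: "s F (Suc n) > 0" using s_ge1[OF F] by (smt (verit))
  have "rho (Suc n) \<le> (ln CA + R n * s F (Suc n)) / s F (Suc n)"
    unfolding rho_def ball_s using L R_nonneg[of n] sp
    by (intro divide_right_mono) (auto simp: algebra_simps)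
  also have "\<dots> = R n + ln CA / s F (Suc n)" using sp by (simp add: field_simps)
  also have "\<dots> \<le> R n + ln CA / (real n + 1)"
    using s_ge_n[OF F, of "Suc n"] lnCA_nonneg by (simp add: frac_le)
  finally show ?thesis .
qed

lemma root_lim: "rho \<longlonglongrightarrow> Rinf"
proof (rule LIMSEQ_I)
  fix e :: real assume e: "e > 0"
  obtain N1 where N1: "\<forall>n\<ge>N1. R n \<le> Rinf + e / 2" using R_upper[of "e/2"] e by auto
  obtain N2 where N2: "\<forall>n\<ge>N2. \<forall>x<k. r x n \<ge> Rinf - e / 2" using lower[of "e/2"] e by auto
  obtain N3 :: nat where N3: "real N3 > 2 * ln CA / e" using reals_Archimedean2 by blast
  have "\<forall>n\<ge>Suc (max (max N1 N2) N3). norm (rho n - Rinf) < e"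
  proof (intro allI impI)
    fix n assume n: "Suc (max (max N1 N2) N3) \<le> n"
    then obtain n' where n': "n = Suc n'" "max (max N1 N2) N3 \<le> n'" by (cases n) auto
    have a: "rho n \<le> R n' + ln CA / (real n' + 1)" using rho_le[of n'] n'(1) by simp
    have b: "R n' \<le> Rinf + e / 2" using N1 n'(2) by auto
    have "2 * ln CA / e < real n' + 1" using N3 n'(2) by linarith
    then have "2 * ln CA < (real n' + 1) * e" using e by (simp add: divide_less_eq)
    then have c: "ln CA / (real n' + 1) < e / 2" by (simp add: divide_less_eq algebra_simps)
    have "n \<ge> N2" using n'(1,2) by simp
    then have "r F n \<ge> Rinf - e / 2" using N2 F by blast
    then have d: "rho n \<ge> Rinf - e / 2" using rho_ge[of n] by linarith
    have lo: "rho n - Rinf < e" using a b c by linarith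
    have hi: "Rinf - rho n < e" using d e by linarith
    show "norm (rho n - Rinf) < e" using lo hi by (simp add: abs_less_iff)
  qed
  then show "\<exists>no. \<forall>n\<ge>no. norm (rho n - Rinf) < e" by blast
qed

end



theorem theorem4p1:
  fixes k :: nat and K :: "nat \<Rightarrow> nat \<Rightarrow> nat"
    and A :: "nat \<Rightarrow> 'a::finite \<Rightarrow> 'a \<Rightarrow> bool"
  assumes "\<forall>i<k. \<forall>j<k. K i j \<in> {0, 1}"
    and "primitive k K"
    and "\<exists>i<k. (\<Sum>j<k. K i j) = k"
  shows "\<forall>i<k. (\<lambda>n. ereal (ln (real (pn k K (markov_tree_shift k K A) n)) /
              real (card (ball k K n))))
           \<longlonglongrightarrow> stem_entropy k K (markov_tree_shift k K A) i"
proof (intro allI impI)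
  fix i assume i: "i < k"
  define X where "X = markov_tree_shift k K A"
  interpret TS k K using assms(1) by unfold_locales
  have "(\<lambda>n. ereal (ln (real (pn k K X n)) / real (card (ball k K n)))) \<longlonglongrightarrow> stem_entropy k K X i"
  proof (cases "X = {}")
    case True
    have ap: "accepted_patterns k K X H = {}" for H using True by (simp add: accepted_patterns_def)
    have 1: "(\<lambda>n. ereal (ln (real (pn k K X n)) / real (card (ball k K n)))) = (\<lambda>n. ereal 0)"
      by (simp add: pn_def ap)
    have 2: "stem_entropy k K X i = ereal 0"
      by (simp add: stem_entropy_def pn_semi_def ap Limsup_const)
    show ?thesis unfolding 1 2 by simp
  next
    case False
    obtain F where F: "F < k" "(\<Sum>j<k. K F j) = k" using assms(3) by blast
    have full: "\<forall>j<k. K F j = 1"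
    proof (rule ccontr)
      assume "\<not> (\<forall>j<k. K F j = 1)"
      then obtain j0 where j0: "j0 < k" "K F j0 \<noteq> 1" by blast
      then have "K F j0 = 0" using assms(1) F(1) by auto
      have "(\<Sum>j<k. K F j) < (\<Sum>j<k. (1::nat))"
      proof (rule sum_strict_mono_ex1)
        show "\<forall>x\<in>{..<k}. K F x \<le> 1"
        proof
          fix x assume "x \<in> {..<k}"
          then have "K F x \<in> {0, 1}" using assms(1) F(1) by blast
          then show "K F x \<le> 1" by auto
        qed
        show "\<exists>a\<in>{..<k}. K F a < 1" using j0 \<open>K F j0 = 0\<close> by auto
      qed simp
      then show False using F(2) by simp
    qed
    obtain m where m: "m \<ge> 1" "\<forall>i<k. \<forall>j<k. kpow k K m i j > 0"
      using assms(2) unfolding primitive_def by blast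
    interpret TSA k K X F m
      by unfold_locales (use False F full m in auto)
    have 1: "(\<lambda>n. ereal (ln (real (pn k K X n)) / real (card (ball k K n)))) = (\<lambda>n. ereal (rho n))"
      by (simp add: pn_def rho_def)
    have e: "ln (real (pn_semi k K X [i] n)) / real (card (semiball k K [i] n)) = r i n" for n
      by (simp add: pn_semi_def semiball_eq[OF i] r_def U_def s_def cP_def)
    have 2: "stem_entropy k K X i = ereal Rinf"
      unfolding stem_entropy_def e
      by (rule lim_imp_Limsup[OF trivial_limit_sequentially]) (rule tendsto_ereal[OF stem_lim[OF i]])
    show ?thesis unfolding 1 2 by (rule tendsto_ereal[OF root_lim])
  qed
  then show "(\<lambda>n. ereal (ln (real (pn k K (markov_tree_shift k K A) n)) / real (card (ball k K n))))
           \<longlonglongrightarrow> stem_entropy k K (markov_tree_shift k K A) i" by (simp add: X_def)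
qed


end
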